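(* Let $p\ge 4$ and let $\Sigma\in\mathbb{R}^{p\times p}$ be positive definite. Then $\Sigma\in F_{p,1}\setminus F_{p,0}$ if and only if every $4\times 4$ principal submatrix of $\Sigma$ belongs to $F_{4,1}$ and at least one $2\times 2$ principal submatrix of $\Sigma$ does not belong to $F_{2,0}$.
   Context: For integers $p\ge 1$, $m\ge 1$, $F_{p,m}=\{\Delta+\Gamma\Gamma^t : \Delta \text{ a positive definite diagonal } p\times p \text{ matrix},\ \Gamma\in\mathbb{R}^{p\times m}\}$. $F_{p,0}$ is the set of positive definite diagonal $p\times p$ matrices. *)

theory Defs
  imports Complex_Main
begin

text \<open>A p x p real matrix is represented as a function nat => nat => real;
only the entries with indices in {0..<p} are relevant.\<close>

definition is_symm :: "nat \<Rightarrow> (nat \<Rightarrow> nat \<Rightarrow> real) \<Rightarrow> bool" where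
  "is_symm p M \<longleftrightarrow> (\<forall>i<p. \<forall>j<p. M i j = M j i)"

definition pos_def :: "nat \<Rightarrow> (nat \<Rightarrow> nat \<Rightarrow> real) \<Rightarrow> bool" where
  "pos_def p M \<longleftrightarrow> is_symm p M \<and>
     (\<forall>x :: nat \<Rightarrow> real. (\<exists>i<p. x i \<noteq> 0) \<longrightarrow>
        (\<Sum>i<p. \<Sum>j<p. x i * M i j * x j) > 0)"

definition is_diag :: "nat \<Rightarrow> (nat \<Rightarrow> nat \<Rightarrow> real) \<Rightarrow> bool" where
  "is_diag p M \<longleftrightarrow> (\<forall>i<p. \<forall>j<p. i \<noteq> j \<longrightarrow> M i j = 0)"

definition F0 :: "nat \<Rightarrow> (nat \<Rightarrow> nat \<Rightarrow> real) \<Rightarrow> bool" where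
  "F0 p M \<longleftrightarrow> is_diag p M \<and> pos_def p M"

definition Fpm :: "nat \<Rightarrow> nat \<Rightarrow> (nat \<Rightarrow> nat \<Rightarrow> real) \<Rightarrow> bool" where
  "Fpm p m M \<longleftrightarrow> (\<exists>(D :: nat \<Rightarrow> nat \<Rightarrow> real) (G :: nat \<Rightarrow> nat \<Rightarrow> real).
     is_diag p D \<and> pos_def p D \<and>
     (\<forall>i<p. \<forall>j<p. M i j = D i j + (\<Sum>k<m. G i k * G j k)))"

definition submat :: "(nat \<Rightarrow> nat \<Rightarrow> real) \<Rightarrow> (nat \<Rightarrow> nat) \<Rightarrow> (nat \<Rightarrow> nat \<Rightarrow> real)" where
  "submat M idx = (\<lambda>a b. M (idx a) (idx b))"

definition principal_idx :: "nat \<Rightarrow> nat \<Rightarrow> (nat \<Rightarrow> nat) \<Rightarrow> bool" where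
  "principal_idx p k idx \<longleftrightarrow> strict_mono_on {..<k} idx \<and> (\<forall>a<k. idx a < p)"

end

theory Submission
  imports Defs
begin


lemma pos_def_diag_pos:
  assumes "pos_def p M" "i < p" shows "M i i > 0"
proof -
  define x where "x = (\<lambda>k. if k = i then 1 else (0::real))"
  have ex: "\<exists>k<p. x k \<noteq> 0" using assms(2) by (auto simp: x_def)
  have "(\<Sum>a<p. \<Sum>b<p. x a * M a b * x b) > 0"
    using assms(1) ex unfolding pos_def_def by blast
  also have "(\<Sum>a<p. \<Sum>b<p. x a * M a b * x b) = (\<Sum>a<p. if a = i then M i i else 0)"
  proof (rule sum.cong[OF refl])
    fix a assume a: "a \<in> {..<p}"
    show "(\<Sum>b<p. x a * M a b * x b) = (if a = i then M i i else 0)"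
    proof (cases "a = i")
      case True
      have "(\<Sum>b<p. x a * M a b * x b) = (\<Sum>b<p. if b = i then M i i else 0)"
        by (rule sum.cong[OF refl]) (simp add: x_def True)
      then show ?thesis using True assms(2) by simp
    next
      case False
      then show ?thesis by (simp add: x_def)
    qed
  qed
  also have "\<dots> = M i i" using assms(2) by simp
  finally show ?thesis .
qed



lemma diag_pos_def:
  assumes "is_diag p D" "\<forall>i<p. D i i > 0" shows "pos_def p D"
  unfolding pos_def_def
proof (intro conjI allI impI)
  show "is_symm p D" using assms(1) unfolding is_symm_def is_diag_def by metis
  fix x :: "nat \<Rightarrow> real" assume "\<exists>i<p. x i \<noteq> 0"
  then obtain i where i: "i < p" "x i \<noteq> 0" by blast
  have inner: "(\<Sum>b<p. x a * D a b * x b) = x a * D a a * x a" if "a < p" for a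
  proof -
    have "(\<Sum>b<p. x a * D a b * x b) = (\<Sum>b<p. if b = a then x a * D a a * x a else 0)"
      by (rule sum.cong) (use assms(1) that in \<open>auto simp: is_diag_def\<close>)
    also have "\<dots> = x a * D a a * x a" using that by simp
    finally show ?thesis .
  qed
  have "(\<Sum>a<p. \<Sum>b<p. x a * D a b * x b) = (\<Sum>a<p. x a * D a a * x a)"
    using inner by simp
  also have "\<dots> > 0"
  proof (rule sum_pos2[of _ i])
    have "0 < x i * x i" using i(2) by (metis not_real_square_gt_zero)
    then have "0 < D i i * (x i * x i)" using i(1) assms(2) by simp
    then show "0 < x i * D i i * x i" by (simp add: mult_ac)
    show "\<And>a. a \<in> {..<p} \<Longrightarrow> 0 \<le> x a * D a a * x a"
    proof -
      fix a assume "a \<in> {..<p}"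
      then have "D a a > 0" using assms(2) by simp
      then have "0 \<le> D a a * (x a * x a)" by simp
      then show "0 \<le> x a * D a a * x a" by (simp add: mult_ac)
    qed
  qed (use i in auto)
  finally show "(\<Sum>a<p. \<Sum>b<p. x a * D a b * x b) > 0" .
qed



lemma pos_def_submat:
  assumes "pos_def p M" "inj_on idx {..<k}" "\<forall>a<k. idx a < p"
  shows "pos_def k (submat M idx)"
  unfolding pos_def_def
proof (intro conjI allI impI)
  show "is_symm k (submat M idx)" using assms unfolding is_symm_def submat_def pos_def_def by auto
  fix y :: "nat \<Rightarrow> real" assume ny: "\<exists>i<k. y i \<noteq> 0"
  let ?I = "idx ` {..<k}"
  define x where "x = (\<lambda>c. if c \<in> ?I then y (inv_into {..<k} idx c) else 0)"
  have xidx: "x (idx a) = y a" if "a < k" for a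
    using that assms(2) by (auto simp: x_def)
  obtain i where i: "i < k" "y i \<noteq> 0" using ny by blast
  have "idx i < p" "x (idx i) \<noteq> 0" using i xidx assms(3) by auto
  then have "\<exists>i<p. x i \<noteq> 0" by blast
  then have pos: "(\<Sum>a<p. \<Sum>b<p. x a * M a b * x b) > 0" using assms(1) unfolding pos_def_def by blast
  have sub: "?I \<subseteq> {..<p}" using assms(3) by auto
  have "(\<Sum>a<p. \<Sum>b<p. x a * M a b * x b) = (\<Sum>a\<in>?I. \<Sum>b<p. x a * M a b * x b)"
    by (rule sum.mono_neutral_right) (use sub in \<open>auto simp: x_def\<close>)
  also have "\<dots> = (\<Sum>a\<in>?I. \<Sum>b\<in>?I. x a * M a b * x b)"
    by (rule sum.cong[OF refl], rule sum.mono_neutral_right) (use sub in \<open>auto simp: x_def\<close>)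
  also have "\<dots> = (\<Sum>a<k. \<Sum>b<k. y a * submat M idx a b * y b)"
    by (simp add: sum.reindex[OF assms(2)] xidx submat_def)
  finally show "(\<Sum>a<k. \<Sum>b<k. y a * submat M idx a b * y b) > 0" using pos by simp
qed




lemma local4:
  assumes H: "\<forall>idx. principal_idx p 4 idx \<longrightarrow> Fpm 4 1 (submat S idx)"
    and T: "T \<subseteq> {..<p}" "card T = 4"
  shows "\<exists>g. (\<forall>x\<in>T. \<forall>y\<in>T. x \<noteq> y \<longrightarrow> S x y = g x * g y) \<and> (\<forall>x\<in>T. (g x)^2 < S x x)"
proof -
  have fin: "finite T" using T(2) by (metis card.infinite zero_neq_numeral)
  define xs where "xs = sorted_list_of_set T"
  have len: "length xs = 4" using T(2) fin by (simp add: xs_def)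
  have setxs: "set xs = T" using fin by (simp add: xs_def)
  have srt: "sorted_wrt (<) xs" by (simp add: xs_def)
  have pi: "principal_idx p 4 ((!) xs)"
    unfolding principal_idx_def
  proof
    show "strict_mono_on {..<4} ((!) xs)"
    proof (rule strict_mono_onI)
      fix r s :: nat assume "r \<in> {..<4}" "s \<in> {..<4}" "r < s"
      then show "xs ! r < xs ! s" using sorted_wrt_nth_less[OF srt, of r s] len by simp
    qed
    show "\<forall>a<4. xs ! a < p" using len setxs T(1) nth_mem by fastforce
  qed
  then obtain D G :: "nat \<Rightarrow> nat \<Rightarrow> real" where DG: "is_diag 4 D" "pos_def 4 D"
    "\<forall>i<4. \<forall>j<4. submat S ((!) xs) i j = D i j + (\<Sum>k<1. G i k * G j k)"
    using H unfolding Fpm_def by blast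
  define ix where "ix = (\<lambda>x. SOME a. a < 4 \<and> xs ! a = x)"
  have ix: "ix x < 4 \<and> xs ! ix x = x" if "x \<in> T" for x
  proof -
    have "\<exists>a. a < 4 \<and> xs ! a = x" using that setxs len by (metis in_set_conv_nth)
    then show ?thesis unfolding ix_def by (rule someI_ex)
  qed
  define g where "g = (\<lambda>x. G (ix x) 0)"
  show ?thesis
  proof (intro exI conjI ballI impI)
    fix x y assume xy: "x \<in> T" "y \<in> T" "x \<noteq> y"
    have ne: "ix x \<noteq> ix y" using ix xy by metis
    have "S x y = submat S ((!) xs) (ix x) (ix y)" using ix xy by (simp add: submat_def)
    also have "\<dots> = D (ix x) (ix y) + G (ix x) 0 * G (ix y) 0" using DG(3) ix xy by simp
    also have "\<dots> = g x * g y" using DG(1) ne ix xy unfolding is_diag_def g_def by simp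
    finally show "S x y = g x * g y" .
  next
    fix x assume x: "x \<in> T"
    have "S x x = submat S ((!) xs) (ix x) (ix x)" using ix x by (simp add: submat_def)
    also have "\<dots> = D (ix x) (ix x) + (g x)^2" using DG(3) ix x by (simp add: g_def power2_eq_square)
    finally show "(g x)^2 < S x x" using pos_def_diag_pos[OF DG(2)] ix x by simp
  qed
qed




lemma pos_def_symm: "pos_def p M \<Longrightarrow> i < p \<Longrightarrow> j < p \<Longrightarrow> M i j = M j i"
  unfolding pos_def_def is_symm_def by blast

lemma build:
  assumes S: "pos_def p S" and a: "a < p" and t: "t > 0"
    and A: "\<And>i j. i < p \<Longrightarrow> j < p \<Longrightarrow> i \<noteq> j \<Longrightarrow> i \<noteq> a \<Longrightarrow> j \<noteq> a \<Longrightarrow> S i j * t = S i a * S j a"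
    and B: "t < S a a"
    and C: "\<And>i. i < p \<Longrightarrow> i \<noteq> a \<Longrightarrow> (S i a)^2 < S i i * t"
  shows "Fpm p 1 S"
proof -
  define \<gamma> where "\<gamma> = (\<lambda>i. if i = a then sqrt t else S i a / sqrt t)"
  define D where "D = (\<lambda>i j. if i = j then S i i - (\<gamma> i)^2 else 0)"
  define G where "G = (\<lambda>i (k::nat). \<gamma> i)"
  have st: "sqrt t > 0" "(sqrt t)^2 = t" using t by auto
  have dg: "is_diag p D" by (simp add: is_diag_def D_def)
  have dpos: "\<forall>i<p. D i i > 0"
  proof (intro allI impI)
    fix i assume i: "i < p"
    show "D i i > 0"
    proof (cases "i = a")
      case True then show ?thesis using B st by (simp add: D_def \<gamma>_def)
    next
      case False
      have "(\<gamma> i)^2 = (S i a)^2 / t" using False st by (simp add: \<gamma>_def power_divide)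
      also have "\<dots> < S i i" using C[OF i False] t by (simp add: divide_less_eq)
      finally show ?thesis by (simp add: D_def)
    qed
  qed
  have off: "S i j = \<gamma> i * \<gamma> j" if ij: "i < p" "j < p" "i \<noteq> j" for i j
  proof (cases "i = a")
    case True then show ?thesis using ij st pos_def_symm[OF S, of a j] a by (simp add: \<gamma>_def)
  next
    case Fi: False
    show ?thesis
    proof (cases "j = a")
      case True then show ?thesis using ij st Fi by (simp add: \<gamma>_def)
    next
      case False
      have "\<gamma> i * \<gamma> j = S i a * S j a / t" using Fi False st by (simp add: \<gamma>_def power2_eq_square)
      also have "\<dots> = S i j" using A[OF ij Fi False] t by (simp add: field_simps)
      finally show ?thesis by simp
    qed
  qed
  show ?thesis unfolding Fpm_def
  proof (intro exI conjI allI impI)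
    show "is_diag p D" by (rule dg)
    show "pos_def p D" by (rule diag_pos_def[OF dg dpos])
    fix i j assume ij: "i < p" "j < p"
    show "S i j = D i j + (\<Sum>k<1. G i k * G j k)"
      using off[OF ij] by (cases "i = j") (auto simp: D_def G_def power2_eq_square)
  qed
qed




lemma local_le4:
  assumes H: "\<forall>idx. principal_idx p 4 idx \<longrightarrow> Fpm 4 1 (submat S idx)"
    and p: "p \<ge> 4" and T: "T \<subseteq> {..<p}" "card T \<le> 4"
  shows "\<exists>g. (\<forall>x\<in>T. \<forall>y\<in>T. x \<noteq> y \<longrightarrow> S x y = g x * g y) \<and> (\<forall>x\<in>T. (g x)^2 < S x x)"
proof -
  have finT: "finite T" using T(1) finite_subset by blast
  have "card ({..<p} - T) = p - card T" using T(1) finT by (simp add: card_Diff_subset)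
  then have "4 - card T \<le> card ({..<p} - T)" using p by simp
  then obtain U where U: "U \<subseteq> {..<p} - T" "card U = 4 - card T" "finite U"
    by (rule obtain_subset_with_card_n)
  have "card (T \<union> U) = card T + card U"
    using U finT by (intro card_Un_disjoint) auto
  then have "card (T \<union> U) = 4" using U(2) T(2) by simp
  moreover have "T \<union> U \<subseteq> {..<p}" using U T by auto
  ultimately obtain g where "(\<forall>x\<in>T \<union> U. \<forall>y\<in>T \<union> U. x \<noteq> y \<longrightarrow> S x y = g x * g y) \<and> (\<forall>x\<in>T \<union> U. (g x)^2 < S x x)"
    using local4[OF H] by blast
  then show ?thesis by blast
qed

lemma card4: "card {a,b,c,d::nat} \<le> 4"
  using card_length[of "[a,b,c,d]"] by simp
lemma card3: "card {a,b,c::nat} \<le> 4"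
  using card_length[of "[a,b,c]"] by simp
lemma card2: "card {a,b::nat} \<le> 4"
  using card_length[of "[a,b]"] by simp





lemma alg1: "P * B = X * Y \<Longrightarrow> Y * C = Z * W \<Longrightarrow> P * (B * C) = X * Z * (W::real)"
  by (metis mult.assoc)

lemma tetrad:
  assumes H: "\<forall>idx. principal_idx p 4 idx \<longrightarrow> Fpm 4 1 (submat S idx)"
    and p: "p \<ge> 4" and lt: "w < p" "x < p" "y < p" "z < p"
    and d: "w \<noteq> x" "w \<noteq> y" "w \<noteq> z" "x \<noteq> y" "x \<noteq> z" "y \<noteq> z"
  shows "S w x * S y z = S w y * S x z"
proof -
  have "{w,x,y,z} \<subseteq> {..<p}" using lt by auto
  from local_le4[OF H p this card4] obtain g where g: "\<forall>u\<in>{w,x,y,z}. \<forall>v\<in>{w,x,y,z}. u \<noteq> v \<longrightarrow> S u v = g u * g v" by blast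
  then show ?thesis using d by (simp add: mult_ac)
qed

lemma backward:
  assumes p: "p \<ge> 4" and S: "pos_def p S"
    and H: "\<forall>idx. principal_idx p 4 idx \<longrightarrow> Fpm 4 1 (submat S idx)"
    and ab: "a < p" "b < p" "a \<noteq> b" "S a b \<noteq> 0"
  shows "Fpm p 1 S"
proof -
  have sym: "S x y = S y x" if "x < p" "y < p" for x y using pos_def_symm[OF S that] .
  note tet = tetrad[OF H p]
  show ?thesis
  proof (cases "\<exists>c<p. c \<noteq> a \<and> c \<noteq> b \<and> S a c \<noteq> 0")
    case True
    then obtain c where c: "c < p" "c \<noteq> a" "c \<noteq> b" "S a c \<noteq> 0" by blast
    have "{a,b,c} \<subseteq> {..<p}" using c ab by auto
    from local_le4[OF H p this card3] obtain g0 where g0: "\<forall>u\<in>{a,b,c}. \<forall>v\<in>{a,b,c}. u \<noteq> v \<longrightarrow> S u v = g0 u * g0 v"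
      "\<forall>u\<in>{a,b,c}. (g0 u)^2 < S u u" by blast
    have e0: "S a b = g0 a * g0 b" "S a c = g0 a * g0 c" "S b c = g0 b * g0 c"
      using g0(1) c ab by auto
    have bc: "S b c \<noteq> 0" using e0 ab(4) c(4) by auto
    define t where "t = S a b * S a c / S b c"
    have tg: "(g a)^2 = t" if "S a b = g a * g b" "S a c = g a * g c" "S b c = g b * g c" for g
    proof -
      have "S a b * S a c = (g a)^2 * S b c" using that by (simp add: power2_eq_square mult_ac)
      then show ?thesis using bc by (simp add: t_def)
    qed
    have t0: "(g0 a)^2 = t" using tg e0 by blast
    have tpos: "t > 0" using t0 e0 ab(4) by (metis mult_eq_0_iff not_real_square_gt_zero power2_eq_square)
    have B: "t < S a a" using t0 g0(2) by auto
    have C: "(S i a)^2 < S i i * t" if i: "i < p" "i \<noteq> a" for i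
    proof -
      have "{a,b,c,i} \<subseteq> {..<p}" using c ab i by auto
      from local_le4[OF H p this card4] obtain g where g: "\<forall>u\<in>{a,b,c,i}. \<forall>v\<in>{a,b,c,i}. u \<noteq> v \<longrightarrow> S u v = g u * g v"
        "\<forall>u\<in>{a,b,c,i}. (g u)^2 < S u u" by blast
      have "S a b = g a * g b" "S a c = g a * g c" "S b c = g b * g c" "S i a = g i * g a"
        using g(1) c ab i by auto
      then have "(g a)^2 = t" "S i a = g i * g a" using tg by auto
      then have "(S i a)^2 = (g i)^2 * t" by (simp add: power_mult_distrib)
      also have "\<dots> < S i i * t" using g(2) tpos by simp
      finally show ?thesis .
    qed
    have Q0: "S i j * (S a b * S a c) = S i a * S j a * S b c"
      if ij: "i < p" "j < p" "i \<noteq> j" "i \<noteq> a" "j \<noteq> a" "j \<noteq> b" "j \<noteq> c" for i j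
    proof -
      consider "i = b" | "i = c" | "i \<noteq> b" "i \<noteq> c" by blast
      then show ?thesis
      proof cases
        case 1
        have e1: "S b j * S a b = S b a * S j b" using sym ij ab by (simp add: mult_ac)
        have e2: "S j b * S a c = S j a * S b c" using tet[of j b a c] ij ab c by auto
        show ?thesis using alg1[OF e1 e2] 1 by simp
      next
        case 2
        have e: "S j c * S a b = S j a * S c b" using tet[of j c a b] ij ab c by auto
        have "S i j * (S a b * S a c) = (S j c * S a b) * S a c" using 2 sym ij c by (simp add: mult_ac)
        also have "\<dots> = S a c * S j a * S c b" using e by (simp add: mult_ac)
        also have "\<dots> = S i a * S j a * S b c" using 2 sym c ab by simp
        finally show ?thesis .
      next
        case 3
        have e1: "S i j * S a b = S i a * S j b" using tet[of i j a b] ij ab 3 by auto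
        have e2: "S j b * S a c = S j a * S b c" using tet[of j b a c] ij ab c by auto
        show ?thesis using alg1[OF e1 e2] .
      qed
    qed
    have Q: "S i j * (S a b * S a c) = S i a * S j a * S b c"
      if ij: "i < p" "j < p" "i \<noteq> j" "i \<noteq> a" "j \<noteq> a" for i j
    proof (cases "j \<noteq> b \<and> j \<noteq> c")
      case True then show ?thesis using Q0 ij by blast
    next
      case jbc: False
      show ?thesis
      proof (cases "i \<noteq> b \<and> i \<noteq> c")
        case True
        have "S j i * (S a b * S a c) = S j a * S i a * S b c" using Q0[of j i] ij True by auto
        then show ?thesis using sym ij by (simp add: mult_ac)
      next
        case False
        then show ?thesis using jbc ij sym ab c by (auto simp: mult_ac)
      qed
    qed
    have A: "S i j * t = S i a * S j a" if ij: "i < p" "j < p" "i \<noteq> j" "i \<noteq> a" "j \<noteq> a" for i j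
      using Q[OF ij] bc by (simp add: t_def field_simps)
    show ?thesis by (rule build[OF S ab(1) tpos A B C])
  next
    case False
    then have ac0: "S a c = 0" if "c < p" "c \<noteq> a" "c \<noteq> b" for c using that by blast
    have "{a,b} \<subseteq> {..<p}" using ab by auto
    from local_le4[OF H p this card2] obtain g0 where g0: "\<forall>u\<in>{a,b}. \<forall>v\<in>{a,b}. u \<noteq> v \<longrightarrow> S u v = g0 u * g0 v"
      "\<forall>u\<in>{a,b}. (g0 u)^2 < S u u" by blast
    have saa: "S a a > 0" "S b b > 0" using pos_def_diag_pos[OF S] ab by auto
    have "(S a b)^2 = (g0 a)^2 * (g0 b)^2" using g0(1) ab by (simp add: power_mult_distrib)
    also have "\<dots> \<le> (g0 a)^2 * S b b" using g0(2) by (intro mult_left_mono) auto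
    also have "\<dots> < S a a * S b b" using g0(2) saa by (intro mult_strict_right_mono) auto
    finally have det: "(S a b)^2 < S a a * S b b" .
    define t where "t = (S a a + (S a b)^2 / S b b) / 2"
    have lo: "(S a b)^2 / S b b < S a a" using det saa by (simp add: divide_less_eq)
    have nn: "0 \<le> (S a b)^2 / S b b" using saa(2) by simp
    have tpos: "t > 0" using nn saa unfolding t_def by (simp add: add_pos_nonneg)
    have B: "t < S a a" using lo by (simp add: t_def)
    have tb: "(S a b)^2 < S b b * t"
    proof -
      have half: "u < (v + u) / 2" if "u < v" for u v :: real using that by simp
      have "(S a b)^2 / S b b < t" using half[OF lo] unfolding t_def .
      then show ?thesis using saa by (simp add: divide_less_eq mult.commute)
    qed
    have z: "S i j = 0 \<and> S b j = 0" if ij: "i < p" "j < p" "i \<noteq> j" "j \<noteq> a" "j \<noteq> b" "i \<noteq> a" for i j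
    proof -
      have "{a,b,i,j} \<subseteq> {..<p}" using ij ab by auto
      from local_le4[OF H p this card4] obtain g where g: "\<forall>u\<in>{a,b,i,j}. \<forall>v\<in>{a,b,i,j}. u \<noteq> v \<longrightarrow> S u v = g u * g v" by blast
      have "S a b = g a * g b" "S a j = g a * g j" using g ij ab by auto
      then have "g j = 0" using ac0[of j] ij ab by auto
      moreover have "S i j = g i * g j" "S b j = g b * g j" using g ij ab by auto
      ultimately show ?thesis by simp
    qed
    have A: "S i j * t = S i a * S j a" if ij: "i < p" "j < p" "i \<noteq> j" "i \<noteq> a" "j \<noteq> a" for i j
    proof (cases "j = b")
      case True
      then have "i \<noteq> b" using ij by auto
      then have "S i a = 0" "S j i = 0" using ac0[of i] z[of j i] sym ij ab True by auto
      then show ?thesis using sym ij by simp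
    next
      case False
      then have "S j a = 0" "S i j = 0" using ac0[of j] z[of i j] sym ij ab by auto
      then show ?thesis by simp
    qed
    have C: "(S i a)^2 < S i i * t" if i: "i < p" "i \<noteq> a" for i
    proof (cases "i = b")
      case True then show ?thesis using tb sym ab by simp
    next
      case False
      then have "S i a = 0" using ac0[of i] sym i ab by auto
      then show ?thesis using pos_def_diag_pos[OF S i(1)] tpos by simp
    qed
    show ?thesis by (rule build[OF S ab(1) tpos A B C])
  qed
qed



theorem theorem2:
  fixes p :: nat and \<Sigma> :: "nat \<Rightarrow> nat \<Rightarrow> real"
  assumes "p \<ge> 4" and "pos_def p \<Sigma>"
  shows "(Fpm p 1 \<Sigma> \<and> \<not> F0 p \<Sigma>) \<longleftrightarrow>
    ((\<forall>idx. principal_idx p 4 idx \<longrightarrow> Fpm 4 1 (submat \<Sigma> idx)) \<and>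
     (\<exists>idx. principal_idx p 2 idx \<and> \<not> F0 2 (submat \<Sigma> idx)))"
proof
  assume L: "Fpm p 1 \<Sigma> \<and> \<not> F0 p \<Sigma>"
  then obtain D G :: "nat \<Rightarrow> nat \<Rightarrow> real" where DG: "is_diag p D" "pos_def p D"
    "\<forall>i<p. \<forall>j<p. \<Sigma> i j = D i j + (\<Sum>k<1. G i k * G j k)"
    unfolding Fpm_def by blast
  have part1: "Fpm 4 1 (submat \<Sigma> idx)" if pi: "principal_idx p 4 idx" for idx
  proof -
    have inj: "inj_on idx {..<4}" and lt: "\<forall>a<4. idx a < p"
      using pi strict_mono_on_imp_inj_on unfolding principal_idx_def by auto
    show ?thesis unfolding Fpm_def
    proof (intro exI conjI allI impI)
      show "is_diag 4 (submat D idx)" using DG(1) inj lt unfolding is_diag_def submat_def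
        by (metis inj_on_contraD lessThan_iff)
      show "pos_def 4 (submat D idx)" by (rule pos_def_submat[OF DG(2) inj lt])
      fix i j :: nat assume "i < 4" "j < 4"
      then show "submat \<Sigma> idx i j = submat D idx i j + (\<Sum>k<1. G (idx i) k * G (idx j) k)"
        using DG(3) lt unfolding submat_def by blast
    qed
  qed
  have "\<not> is_diag p \<Sigma>" using L assms(2) unfolding F0_def by blast
  then obtain i j where ij: "i < p" "j < p" "i \<noteq> j" "\<Sigma> i j \<noteq> 0" unfolding is_diag_def by blast
  define idx where "idx = (\<lambda>n::nat. if n = 0 then min i j else max i j)"
  have pi2: "principal_idx p 2 idx" unfolding principal_idx_def
  proof
    show "strict_mono_on {..<2} idx"
    proof (rule strict_mono_onI)
      fix r s :: nat assume "r \<in> {..<2}" "s \<in> {..<2}" "r < s"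
      then have "r = 0" "s = 1" by auto
      then show "idx r < idx s" using ij(3) by (simp add: idx_def)
    qed
    show "\<forall>a<2. idx a < p" using ij by (simp add: idx_def)
  qed
  have "submat \<Sigma> idx 0 1 \<noteq> 0"
    using ij pos_def_symm[OF assms(2) ij(1,2)] by (simp add: submat_def idx_def min_def max_def)
  then have "\<not> F0 2 (submat \<Sigma> idx)" unfolding F0_def is_diag_def by force
  then show "(\<forall>idx. principal_idx p 4 idx \<longrightarrow> Fpm 4 1 (submat \<Sigma> idx)) \<and>
     (\<exists>idx. principal_idx p 2 idx \<and> \<not> F0 2 (submat \<Sigma> idx))" using part1 pi2 by blast
next
  assume R: "(\<forall>idx. principal_idx p 4 idx \<longrightarrow> Fpm 4 1 (submat \<Sigma> idx)) \<and>
     (\<exists>idx. principal_idx p 2 idx \<and> \<not> F0 2 (submat \<Sigma> idx))"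
  then obtain idx where pi: "principal_idx p 2 idx" and nF: "\<not> F0 2 (submat \<Sigma> idx)" by blast
  have inj: "inj_on idx {..<2}" and lt: "\<forall>a<2. idx a < p"
    using pi strict_mono_on_imp_inj_on unfolding principal_idx_def by auto
  have "pos_def 2 (submat \<Sigma> idx)" by (rule pos_def_submat[OF assms(2) inj lt])
  then have "\<not> is_diag 2 (submat \<Sigma> idx)" using nF unfolding F0_def by blast
  then obtain r s where rs: "r < 2" "s < 2" "r \<noteq> s" "\<Sigma> (idx r) (idx s) \<noteq> 0"
    unfolding is_diag_def submat_def by blast
  have ne: "idx r \<noteq> idx s" using inj rs by (metis inj_on_contraD lessThan_iff)
  have fp: "Fpm p 1 \<Sigma>" using backward[OF assms(1,2)] R lt rs ne by blast
  have "\<not> is_diag p \<Sigma>" using rs ne lt unfolding is_diag_def by blast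
  then show "Fpm p 1 \<Sigma> \<and> \<not> F0 p \<Sigma>" using fp unfolding F0_def by blast
qed


end
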